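(* Let $\mathcal{G}$ be a noncompact metric graph in the class $\mathbf{G}$ with finitely many edges, at least one of which is bounded, and such that every vertex of $\mathcal{G}$ is attached to an even number of half-lines (possibly zero). Then for every $p>6$ there exists $\overline{\mu}>0$, depending on $p$ and $\mathcal{G}$, such that for all $\mu\ge\overline{\mu}$ problem \[ \begin{cases} u''+u^{p-1}=\lambda u & \text{on every edge of }\mathcal{G},\\ u\in H^1(\mathcal{G}),\ u>0 & \text{on }\mathcal{G},\\ \sum_{e\succ \mathrm{v}}\frac{du}{dx_e}(\mathrm{v})=0 & \text{for every vertex }\mathrm{v}, \end{cases} \] admits a positive solution $u\in H^1_\mu(\mathcal{G})$ (for some $\lambda\in\mathbb R$) with $E(u,\mathcal{G})<0$.
   Context: A metric graph $\mathcal{G}=(\mathbb{V},\mathbb{E})$ belongs to the class $\mathbf{G}$ if it is connected, has at most countably many edges, every vertex has finite degree, and $\inf_{e\in\mathbb{E}}|e|>0$. Noncompact means it has at least one half-line or infinitely many edges. $H^1(\mathcal{G})$ is the space of continuous functions on $\mathcal{G}$, $H^1$ on each edge, with finite $H^1$ norm; $H^1_\mu(\mathcal{G})=\{v\in H^1(\mathcal{G}):\|v\|_{L^2}^2=\mu\}$; $E(u,\mathcal{G})=\frac12\|u'\|_{L^2(\mathcal G)}^2-\frac1p\|u\|_{L^p(\mathcal G)}^p$. The vertex condition is the Kirchhoff condition: the sum over edges $e$ incident at $\mathrm v$ of the outgoing derivatives of $u$ at $\mathrm v$ vanishes. *)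

theory Defs
  imports "HOL-Analysis.Analysis"
begin

text \<open>Bounded edges e \<in> bedges are identified with [0, len e], the point 0
being glued to vertex src e and the point len e to vertex tgt e (self-loops and multiple
edges are allowed).  Half-lines h \<in> hedges are identified with [0, \<infinity>), the point 0
being glued to vertex att h.\<close>

record mgraph =
  verts  :: "nat set"
  bedges :: "nat set"
  hedges :: "nat set"
  len    :: "nat \<Rightarrow> real"
  src    :: "nat \<Rightarrow> nat"
  tgt    :: "nat \<Rightarrow> nat"
  att    :: "nat \<Rightarrow> nat"

definition adj :: "mgraph \<Rightarrow> (nat \<times> nat) set" where
  "adj G = {(src G e, tgt G e) | e. e \<in> bedges G} \<union> {(tgt G e, src G e) | e. e \<in> bedges G}"

text \<open>Class G with finitely many edges (finite degrees and inf of lengths > 0 are then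
automatic): connected, finitely many edges, positive lengths.\<close>
definition finite_graph_in_G :: "mgraph \<Rightarrow> bool" where
  "finite_graph_in_G G \<longleftrightarrow>
     verts G \<noteq> {} \<and> finite (verts G) \<and> finite (bedges G) \<and> finite (hedges G) \<and>
     (\<forall>e\<in>bedges G. 0 < len G e \<and> src G e \<in> verts G \<and> tgt G e \<in> verts G) \<and>
     (\<forall>h\<in>hedges G. att G h \<in> verts G) \<and>
     (\<forall>v\<in>verts G. \<forall>w\<in>verts G. (v, w) \<in> (adj G)\<^sup>*)"

text \<open>Noncompact (for finitely many edges): at least one half-line.\<close>
definition noncompact :: "mgraph \<Rightarrow> bool" where
  "noncompact G \<longleftrightarrow> hedges G \<noteq> {}"

text \<open>A function on the graph is a pair (ub, uh): ub e is its restriction to the bounded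
edge e (parametrised on [0, len e]), uh h its restriction to the half-line h.\<close>

text \<open>Continuity at the vertices (continuity inside edges is part of the edge requirements).\<close>
definition vertex_continuous :: "mgraph \<Rightarrow> (nat \<Rightarrow> real \<Rightarrow> real) \<Rightarrow> (nat \<Rightarrow> real \<Rightarrow> real) \<Rightarrow> bool" where
  "vertex_continuous G ub uh \<longleftrightarrow> (\<exists>\<phi> :: nat \<Rightarrow> real.
      (\<forall>e\<in>bedges G. ub e 0 = \<phi> (src G e) \<and> ub e (len G e) = \<phi> (tgt G e)) \<and>
      (\<forall>h\<in>hedges G. uh h 0 = \<phi> (att G h)))"

definition mass :: "mgraph \<Rightarrow> (nat \<Rightarrow> real \<Rightarrow> real) \<Rightarrow> (nat \<Rightarrow> real \<Rightarrow> real) \<Rightarrow> real" where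
  "mass G ub uh = (\<Sum>e\<in>bedges G. integral {0..len G e} (\<lambda>x. (ub e x)\<^sup>2))
                 + (\<Sum>h\<in>hedges G. integral {0..} (\<lambda>x. (uh h x)\<^sup>2))"

definition energy :: "real \<Rightarrow> mgraph \<Rightarrow> (nat \<Rightarrow> real \<Rightarrow> real) \<Rightarrow> (nat \<Rightarrow> real \<Rightarrow> real)
                       \<Rightarrow> (nat \<Rightarrow> real \<Rightarrow> real) \<Rightarrow> (nat \<Rightarrow> real \<Rightarrow> real) \<Rightarrow> real" where
  "energy p G ub uh dub duh =
     1/2 * ((\<Sum>e\<in>bedges G. integral {0..len G e} (\<lambda>x. (dub e x)\<^sup>2))
            + (\<Sum>h\<in>hedges G. integral {0..} (\<lambda>x. (duh h x)\<^sup>2)))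
   - 1/p * ((\<Sum>e\<in>bedges G. integral {0..len G e} (\<lambda>x. \<bar>ub e x\<bar> powr p))
            + (\<Sum>h\<in>hedges G. integral {0..} (\<lambda>x. \<bar>uh h x\<bar> powr p)))"

definition edge_solution :: "real \<Rightarrow> real \<Rightarrow> real set \<Rightarrow> (real \<Rightarrow> real) \<Rightarrow> (real \<Rightarrow> real) \<Rightarrow> bool" where
  "edge_solution p lam S f df \<longleftrightarrow> (\<exists>ddf. \<forall>x\<in>S.
      (f has_real_derivative df x) (at x within S) \<and>
      (df has_real_derivative ddf x) (at x within S) \<and>
      ddf x + (f x) powr (p - 1) = lam * f x)"

definition positive_kirchhoff_solution ::
  "real \<Rightarrow> real \<Rightarrow> mgraph \<Rightarrow> (nat \<Rightarrow> real \<Rightarrow> real) \<Rightarrow> (nat \<Rightarrow> real \<Rightarrow> real)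
     \<Rightarrow> (nat \<Rightarrow> real \<Rightarrow> real) \<Rightarrow> (nat \<Rightarrow> real \<Rightarrow> real) \<Rightarrow> bool" where
  "positive_kirchhoff_solution p lam G ub uh dub duh \<longleftrightarrow>
     (\<forall>e\<in>bedges G. edge_solution p lam {0..len G e} (ub e) (dub e)) \<and>
     (\<forall>h\<in>hedges G. edge_solution p lam {0..} (uh h) (duh h)) \<and>
     vertex_continuous G ub uh \<and>
     (\<forall>h\<in>hedges G. (\<lambda>x. (uh h x)\<^sup>2) integrable_on {0..} \<and> (\<lambda>x. (duh h x)\<^sup>2) integrable_on {0..}) \<and>
     (\<forall>e\<in>bedges G. \<forall>x\<in>{0..len G e}. 0 < ub e x) \<and>
     (\<forall>h\<in>hedges G. \<forall>x\<in>{0..}. 0 < uh h x) \<and>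
     (\<forall>v\<in>verts G.
        (\<Sum>e\<in>{e\<in>bedges G. src G e = v}. dub e 0)
      - (\<Sum>e\<in>{e\<in>bedges G. tgt G e = v}. dub e (len G e))
      + (\<Sum>h\<in>{h\<in>hedges G. att G h = v}. duh h 0) = 0)"

end

theory Submission
  imports Defs
begin

definition sb :: "real \<Rightarrow> real" where "sb p = 2/(p-2)"
definition sg :: "real \<Rightarrow> real" where "sg p = (p-2)/2"
definition sA :: "real \<Rightarrow> real" where "sA p = (p/2) powr (1/(p-2))"
definition phi :: "real \<Rightarrow> real \<Rightarrow> real" where
  "phi p x = sA p * cosh (sg p * x) powr (- sb p)"
definition dphi :: "real \<Rightarrow> real \<Rightarrow> real" where
  "dphi p x = - sA p * sinh (sg p * x) * cosh (sg p * x) powr (- sb p - 1)"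

lemma cosh_pos_real: "0 < cosh (x::real)"
  by (simp add: cosh_real_pos)

lemma sbsg: "p > 2 \<Longrightarrow> sb p * sg p = 1"
  by (simp add: sb_def sg_def)

lemma sA_pos: "p > 2 \<Longrightarrow> sA p > 0" by (simp add: sA_def)

lemma sA_pow: "p > 2 \<Longrightarrow> sA p powr (p - 1) = sA p * (p/2)"
proof -
  assume p: "p > 2"
  have "sA p powr (p-1) = sA p powr (1 + (p-2))" by simp
  also have "\<dots> = sA p powr 1 * sA p powr (p-2)"
    by (rule powr_add)
  also have "\<dots> = sA p * sA p powr (p-2)"
    using sA_pos[OF p] by simp
  also have "sA p powr (p-2) = p/2" using p
    by (simp add: sA_def powr_powr)
  finally show ?thesis .
qed

lemma phi_deriv: assumes p: "p > 2" shows "(phi p has_real_derivative dphi p x) (at x)"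
proof -
  have "((\<lambda>x. sA p * cosh (sg p * x) powr (- sb p)) has_real_derivative
     sA p * ((- sb p) * cosh (sg p * x) powr (- sb p - 1) * (sinh (sg p * x) * sg p))) (at x)"
    by (auto intro!: derivative_eq_intros simp: cosh_pos_real)
  moreover have "sA p * ((- sb p) * cosh (sg p * x) powr (- sb p - 1) * (sinh (sg p * x) * sg p)) = dphi p x"
    using sbsg[OF p] by (simp add: dphi_def algebra_simps)
  ultimately show ?thesis unfolding phi_def[abs_def] by simp
qed

lemma powr_split1: "(c::real) > 0 \<Longrightarrow> c powr (a - 1) = c powr a / c"
  by (simp add: powr_diff)
lemma powr_split2: "(c::real) > 0 \<Longrightarrow> c powr (a - 2) = c powr a / c^2"
  by (simp add: powr_diff power2_eq_square)

lemma phi_pow: assumes p: "p > 2"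
  shows "phi p x powr (p - 1) = sA p * (p/2) * cosh (sg p * x) powr (- sb p) / (cosh (sg p * x))^2"
proof -
  let ?C = "cosh (sg p * x)"
  have C: "?C > 0" by (rule cosh_pos_real)
  have "phi p x powr (p-1) = sA p powr (p-1) * (?C powr (- sb p)) powr (p-1)"
    unfolding phi_def using sA_pos[OF p] by (simp add: powr_mult)
  also have "(?C powr (- sb p)) powr (p-1) = ?C powr (- sb p - 2)"
  proof -
    have ex: "- (sb p * (p-1)) = - sb p - 2" using p by (simp add: sb_def field_simps)
    show ?thesis by (simp add: powr_powr ex)
  qed
  also have "\<dots> = ?C powr (- sb p) / ?C^2" using C by (rule powr_split2)
  finally show ?thesis using sA_pow[OF p] by simp
qed

lemma dphi_deriv: assumes p: "p > 2"
  shows "(dphi p has_real_derivative (phi p x - phi p x powr (p - 1))) (at x)"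
proof -
  let ?C = "cosh (sg p * x)" and ?S = "sinh (sg p * x)" and ?K = "cosh (sg p * x) powr (- sb p)"
  have C: "?C > 0" by (rule cosh_pos_real)
  have d: "((\<lambda>x. - sA p * sinh (sg p * x) * cosh (sg p * x) powr (- sb p - 1)) has_real_derivative
     - sA p * (cosh (sg p * x) * sg p) * ?C powr (- sb p - 1)
     - sA p * ?S * ((- sb p - 1) * ?C powr (- sb p - 1 - 1) * (?S * sg p))) (at x)"
    by (auto intro!: derivative_eq_intros simp: cosh_pos_real)
  have e1: "?C powr (- sb p - 1) = ?K / ?C" using C by (rule powr_split1)
  have e2: "?C powr (- sb p - 1 - 1) = ?K / ?C^2" using C powr_split2[OF C, of "- sb p"]
    by (simp add: diff_diff_eq)
  have SS: "?S^2 = ?C^2 - 1" by (simp add: cosh_square_eq)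
  have g: "sg p * (sb p + 1) = p/2" using p by (simp add: sb_def sg_def field_simps)
  have "- sA p * (cosh (sg p * x) * sg p) * ?C powr (- sb p - 1)
     - sA p * ?S * ((- sb p - 1) * ?C powr (- sb p - 1 - 1) * (?S * sg p))
     = - sA p * sg p * ?K + sA p * sg p * (sb p + 1) * ?S^2 * ?K / ?C^2"
    unfolding e1 e2 using C by (simp add: field_simps power2_eq_square)
  also have "\<dots> = - sA p * sg p * ?K + sA p * sg p * (sb p + 1) * ?K - sA p * sg p * (sb p + 1) * ?K / ?C^2"
    unfolding SS using C by (simp add: field_simps)
  also have "\<dots> = sA p * (sb p * sg p) * ?K - sA p * (sg p * (sb p + 1)) * ?K / ?C^2"
    by (simp add: algebra_simps)
  also have "\<dots> = phi p x - phi p x powr (p - 1)"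
    unfolding phi_pow[OF p] g sbsg[OF p] by (simp add: phi_def)
  finally show ?thesis using d unfolding dphi_def[abs_def] by simp
qed

lemma phi_pos: "p > 2 \<Longrightarrow> phi p x > 0"
  by (simp add: phi_def sA_pos cosh_pos_real)

lemma phi_even: "phi p (-x) = phi p x"
  by (simp add: phi_def)

lemma dphi_odd: "dphi p (-x) = - dphi p x"
  by (simp add: dphi_def)

definition sa :: "real \<Rightarrow> real" where "sa p = arcosh (sqrt (p/2)) / sg p"

lemma phi_sa: assumes p: "p > 2" shows "phi p (sa p) = 1"
proof -
  have g: "sg p > 0" using p by (simp add: sg_def)
  have q: "sqrt (p/2) \<ge> 1" using p by simp
  have "cosh (sg p * sa p) = sqrt (p/2)" using g q by (simp add: sa_def)
  hence "phi p (sa p) = sA p * sqrt (p/2) powr (- sb p)" by (simp add: phi_def)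
  also have "sqrt (p/2) powr (- sb p) = (p/2) powr (- (1/(p-2)))"
    using p by (simp add: powr_half_sqrt[symmetric] powr_powr sb_def)
  also have "sA p * \<dots> = 1" using p by (simp add: sA_def powr_minus)
  finally show ?thesis .
qed

lemma dphi_le: assumes p: "p > 2" shows "\<bar>dphi p x\<bar> \<le> phi p x"
proof -
  let ?C = "cosh (sg p * x)" and ?S = "sinh (sg p * x)" and ?K = "cosh (sg p * x) powr (- sb p)"
  have C: "?C > 0" by (rule cosh_pos_real)
  have SC: "\<bar>?S\<bar> \<le> ?C"
    using sinh_le_cosh_real[of "sg p * x"] sinh_le_cosh_real[of "- (sg p * x)"]
    by (simp add: abs_if)
  have "\<bar>dphi p x\<bar> = sA p * \<bar>?S\<bar> * (?K / ?C)"
    unfolding dphi_def powr_split1[OF C] using sA_pos[OF p] C by (simp add: abs_mult)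
  also have "\<dots> \<le> sA p * ?C * (?K / ?C)"
    using SC sA_pos[OF p] C by (intro mult_right_mono mult_left_mono) auto
  also have "\<dots> = phi p x" using C by (simp add: phi_def)
  finally show ?thesis .
qed

lemma phi_le_A: assumes p: "p > 2" shows "phi p x \<le> sA p"
proof -
  have "cosh (sg p * x) powr (- sb p) \<le> 1"
  proof -
    have "1 \<le> cosh (sg p * x) powr (sb p)"
      using p by (intro ge_one_powr_ge_zero) (auto simp: sb_def cosh_real_ge_1)
    thus ?thesis by (simp add: powr_minus inverse_le_1_iff)
  qed
  thus ?thesis using sA_pos[OF p] unfolding phi_def
    by (simp add: mult_left_le)
qed

lemma phi_le_exp: assumes p: "p > 2"
  shows "phi p x \<le> sA p * 2 powr sb p * exp (- \<bar>x\<bar>)"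
proof -
  have g: "sg p > 0" using p by (simp add: sg_def)
  have b: "sb p > 0" using p by (simp add: sb_def)
  have ce: "exp (\<bar>sg p * x\<bar>) / 2 \<le> cosh (sg p * x)"
  proof -
    have "cosh (sg p * x) = cosh \<bar>sg p * x\<bar>" by simp
    also have "\<dots> = (exp \<bar>sg p * x\<bar> + exp (- \<bar>sg p * x\<bar>)) / 2" by (rule cosh_field_def)
    finally have "cosh (sg p * x) = (exp \<bar>sg p * x\<bar> + exp (- \<bar>sg p * x\<bar>)) / 2" .
    moreover have "exp (\<bar>sg p * x\<bar>) / 2 \<le> (exp \<bar>sg p * x\<bar> + exp (- \<bar>sg p * x\<bar>)) / 2"
      by (intro divide_right_mono) auto
    ultimately show ?thesis by simp
  qed
  have "cosh (sg p * x) powr (- sb p) \<le> (exp (\<bar>sg p * x\<bar>) / 2) powr (- sb p)"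
    using b ce by (intro powr_mono2') auto
  also have "(exp (\<bar>sg p * x\<bar>) / 2) powr (- sb p) = exp (\<bar>sg p * x\<bar>) powr (- sb p) / 2 powr (- sb p)"
    by (intro powr_divide; simp)
  also have "exp (\<bar>sg p * x\<bar>) powr (- sb p) = exp (- \<bar>x\<bar>)"
  proof -
    have "exp (\<bar>sg p * x\<bar>) powr (- sb p) = exp (\<bar>sg p * x\<bar> * (- sb p))"
      unfolding powr_def by simp
    also have "\<bar>sg p * x\<bar> * (- sb p) = - ((sb p * sg p) * \<bar>x\<bar>)"
      using g by (simp add: abs_mult)
    finally show ?thesis using sbsg[OF p] by simp
  qed
  also have "exp (- \<bar>x\<bar>) / 2 powr (- sb p) = 2 powr sb p * exp (- \<bar>x\<bar>)"
    by (simp add: powr_minus_divide)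
  finally have "cosh (sg p * x) powr (- sb p) \<le> 2 powr sb p * exp (- \<bar>x\<bar>)" .
  hence "sA p * cosh (sg p * x) powr (- sb p) \<le> sA p * (2 powr sb p * exp (- \<bar>x\<bar>))"
    using sA_pos[OF p] by (intro mult_left_mono) auto
  thus ?thesis unfolding phi_def by (simp add: mult.assoc)
qed

lemma exp_dom:
  fixes g :: "real \<Rightarrow> real"
  assumes c: "continuous_on {0..} g" and b: "\<And>y. y \<ge> 0 \<Longrightarrow> \<bar>g y\<bar> \<le> M * exp (-y)"
  shows "g absolutely_integrable_on {0..}"
proof -
  have e: "(\<lambda>y. M * exp (-y)) integrable_on {0..}"
  proof -
    have "(\<lambda>x. exp (- x)) integrable_on {0::real..}"
      using integrable_on_exp_minus_to_infinity[of 1 0] by simp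
    from integrable_on_cmult_left[OF this, of M] show ?thesis by simp
  qed
  have m: "g \<in> borel_measurable (lebesgue_on {0..})"
    by (rule continuous_imp_measurable_on_sets_lebesgue[OF c]) simp
  have "g integrable_on {0..}"
    by (rule measurable_bounded_by_integrable_imp_integrable_real[OF m e]) (auto simp: b)
  then show ?thesis by (intro absolutely_integrable_integrable_bound[OF _ _ e]) (auto simp: b)
qed

lemma scale_int:
  fixes f :: "real \<Rightarrow> real"
  assumes f: "f absolutely_integrable_on {0..}" and t: "t > 0"
  shows "(\<lambda>x. f (t*x)) integrable_on {0..} \<and> integral {0..} (\<lambda>x. f (t*x)) = integral {0..} f / t"
proof -
  have img: "(\<lambda>x. t*x) ` {0..} = {0..}"
  proof (intro equalityI subsetI)
    fix y :: real assume "y \<in> {0..}"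
    hence "y = t * (y/t)" "y/t \<in> {0..}" using t by auto
    thus "y \<in> (\<lambda>x. t*x) ` {0..}" by blast
  qed (use t in auto)
  have der: "\<And>x. x \<in> {0..} \<Longrightarrow> ((\<lambda>x. t*x) has_field_derivative t) (at x within {0..})"
    by (auto intro!: derivative_eq_intros)
  have inj: "inj_on (\<lambda>x. t*x) {0..}" using t by (auto simp: inj_on_def)
  have S: "{0::real..} \<in> sets lebesgue" by simp
  have "(\<lambda>x. \<bar>t\<bar> * f (t*x)) absolutely_integrable_on {0..} \<and> integral {0..} (\<lambda>x. \<bar>t\<bar> * f (t*x)) = integral {0..} f"
    using has_absolute_integral_change_of_variables_1'[OF S der inj, of f "integral {0..} f"] f img
    by simp
  hence A: "(\<lambda>x. t * f (t*x)) integrable_on {0..}" "integral {0..} (\<lambda>x. t * f (t*x)) = integral {0..} f"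
    using t by (auto dest: set_lebesgue_integral_eq_integral(1))
  have eq: "(\<lambda>x. f (t*x)) = (\<lambda>x. (1/t) * (t * f (t*x)))" using t by auto
  have B: "(\<lambda>x. (1/t) * (t * f (t*x))) integrable_on {0..}"
    using integrable_on_cmult_left[OF A(1), of "1/t"] by simp
  have C: "integral {0..} (\<lambda>x. (1/t) * (t * f (t*x))) = (1/t) * integral {0..} f"
    using A(2) by (simp only: integral_mult_right)
  show ?thesis unfolding eq using B C by simp
qed

lemma phi_isCont: "p > 2 \<Longrightarrow> isCont (phi p) x"
  using DERIV_isCont[OF phi_deriv] by blast

lemma dphi_isCont: "p > 2 \<Longrightarrow> isCont (dphi p) x"
  using DERIV_isCont[OF dphi_deriv] by blast

lemma shift_isCont:
  fixes f :: "real \<Rightarrow> real"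
  assumes "\<And>x. isCont f x" shows "isCont (\<lambda>y. f (y + s)) x"
  proof -
  have "isCont (\<lambda>y. y + s) x" by simp
  thus ?thesis using isCont_o2[OF _ assms] by blast
qed

lemma psi_ints: assumes p: "p > 2"
  shows "(\<lambda>y. (phi p (y+s))^2) absolutely_integrable_on {0..}"
    "(\<lambda>y. (dphi p (y+s))^2) absolutely_integrable_on {0..}"
    "(\<lambda>y. \<bar>phi p (y+s)\<bar> powr p) absolutely_integrable_on {0..}"
proof -
  define D where "D = sA p * 2 powr sb p * exp \<bar>s\<bar>"
  have A: "sA p > 0" using sA_pos[OF p] .
  have bd: "phi p (y+s) \<le> D * exp (-y)" if "y \<ge> 0" for y
  proof -
    have "phi p (y+s) \<le> sA p * 2 powr sb p * exp (- \<bar>y+s\<bar>)" by (rule phi_le_exp[OF p])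
    also have "exp (- \<bar>y+s\<bar>) \<le> exp \<bar>s\<bar> * exp (-y)"
      using that by (simp add: exp_add[symmetric] abs_if)
    finally show ?thesis using A unfolding D_def
      by (simp add: mult.assoc mult_left_mono)
  qed
  have pos: "phi p (y+s) > 0" for y using phi_pos[OF p] .
  have le: "phi p (y+s) \<le> sA p" for y using phi_le_A[OF p] .
  have c1: "isCont (\<lambda>y. phi p (y+s)) x" for x by (rule shift_isCont[OF phi_isCont[OF p]])
  have c2: "isCont (\<lambda>y. dphi p (y+s)) x" for x by (rule shift_isCont[OF dphi_isCont[OF p]])
  show "(\<lambda>y. (phi p (y+s))^2) absolutely_integrable_on {0..}"
  proof (rule exp_dom[where M = "sA p * D"])
    show "continuous_on {0..} (\<lambda>y. (phi p (y+s))^2)"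
      by (intro continuous_at_imp_continuous_on ballI continuous_intros c1)
    fix y :: real assume y: "y \<ge> 0"
    have "(phi p (y+s))^2 = phi p (y+s) * phi p (y+s)" by (simp add: power2_eq_square)
    also have "\<dots> \<le> sA p * (D * exp (-y))"
      using bd[OF y] le pos A by (intro mult_mono) (auto simp: less_imp_le)
    finally show "\<bar>(phi p (y+s))^2\<bar> \<le> sA p * D * exp (-y)" by simp
  qed
  show "(\<lambda>y. (dphi p (y+s))^2) absolutely_integrable_on {0..}"
  proof (rule exp_dom[where M = "sA p * D"])
    show "continuous_on {0..} (\<lambda>y. (dphi p (y+s))^2)"
      by (intro continuous_at_imp_continuous_on ballI continuous_intros c2)
    fix y :: real assume y: "y \<ge> 0"
    have d1: "\<bar>dphi p (y+s)\<bar> \<le> sA p" using dphi_le[OF p, of "y+s"] le[of y] by linarith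
    have d2: "\<bar>dphi p (y+s)\<bar> \<le> D * exp (-y)" using dphi_le[OF p, of "y+s"] bd[OF y] by linarith
    have "(dphi p (y+s))^2 = \<bar>dphi p (y+s)\<bar> * \<bar>dphi p (y+s)\<bar>" by (simp add: power2_eq_square)
    also have "\<dots> \<le> sA p * (D * exp (-y))"
      using d1 d2 A by (intro mult_mono) (auto simp: less_imp_le)
    finally show "\<bar>(dphi p (y+s))^2\<bar> \<le> sA p * D * exp (-y)" by simp
  qed
  show "(\<lambda>y. \<bar>phi p (y+s)\<bar> powr p) absolutely_integrable_on {0..}"
  proof (rule exp_dom[where M = "sA p powr (p-1) * D"])
    have cc: "continuous_on {0..} (\<lambda>y. phi p (y+s) powr p)"
      by (intro continuous_at_imp_continuous_on ballI continuous_intros c1) (use pos in \<open>metis less_irrefl\<close>)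
    have ee: "(\<lambda>y. \<bar>phi p (y+s)\<bar> powr p) = (\<lambda>y. phi p (y+s) powr p)"
      using pos by (simp add: less_imp_le)
    show "continuous_on {0..} (\<lambda>y. \<bar>phi p (y+s)\<bar> powr p)" unfolding ee by (rule cc)
    fix y :: real assume y: "y \<ge> 0"
    have "\<bar>\<bar>phi p (y+s)\<bar> powr p\<bar> = phi p (y+s) powr (p-1) * phi p (y+s)"
      using pos[of y] by (simp add: less_imp_le powr_diff)
    also have "\<dots> \<le> sA p powr (p-1) * (D * exp (-y))"
      using bd[OF y] le pos p A by (intro mult_mono powr_mono2) (auto simp: less_imp_le)
    finally show "\<bar>\<bar>phi p (y+s)\<bar> powr p\<bar> \<le> sA p powr (p-1) * D * exp (-y)" by simp
  qed
qed

lemma scaled_ode: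
  assumes p: "p > 2" and t: "t > 0" and y: "y > 0"
  shows "t powr (sb p + 2) * (y - y powr (p - 1)) + (t powr sb p * y) powr (p - 1)
         = t^2 * (t powr sb p * y)"
proof -
  have e: "sb p * (p - 1) = sb p + 2" using p by (simp add: sb_def field_simps)
  have "(t powr sb p * y) powr (p - 1) = t powr (sb p + 2) * y powr (p - 1)"
    using t y by (simp add: powr_mult powr_powr e)
  moreover have "t powr (sb p + 2) = t^2 * t powr sb p"
    using t by (simp add: powr_add powr_numeral)
  ultimately show ?thesis by (simp add: algebra_simps)
qed

lemma uh_deriv:
  assumes p: "p > 2"
  shows "((\<lambda>x. c * phi p (t*x + s)) has_real_derivative c * (dphi p (t*x + s) * t)) (at x)"
proof -
  have "((\<lambda>x. phi p (t*x + s)) has_real_derivative dphi p (t*x + s) * t) (at x)"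
    by (rule DERIV_chain2[OF phi_deriv[OF p]]) (auto intro!: derivative_eq_intros)
  thus ?thesis by (rule DERIV_cmult)
qed

lemma duh_deriv:
  assumes p: "p > 2"
  shows "((\<lambda>x. c * dphi p (t*x + s)) has_real_derivative
          c * ((phi p (t*x + s) - phi p (t*x + s) powr (p - 1)) * t)) (at x)"
proof -
  have "((\<lambda>x. dphi p (t*x + s)) has_real_derivative (phi p (t*x + s) - phi p (t*x + s) powr (p - 1)) * t) (at x)"
    by (rule DERIV_chain2[OF dphi_deriv[OF p]]) (auto intro!: derivative_eq_intros)
  thus ?thesis by (rule DERIV_cmult)
qed

lemma construct:
  assumes G: "finite_graph_in_G G" and p: "p > 2" and t: "t > 0"
    and sh: "\<forall>h\<in>hedges G. sh h = sa p \<or> sh h = - sa p"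
    and bal: "\<forall>v\<in>verts G. (\<Sum>h\<in>{h\<in>hedges G. att G h = v}. dphi p (sh h)) = 0"
  defines "ub \<equiv> \<lambda>(e::nat) (x::real). t powr sb p"
    and "dub \<equiv> \<lambda>(e::nat) (x::real). (0::real)"
    and "uh \<equiv> \<lambda>h x. t powr sb p * phi p (t*x + sh h)"
    and "duh \<equiv> \<lambda>h x. t powr (sb p + 1) * dphi p (t*x + sh h)"
  shows "positive_kirchhoff_solution p (t^2) G ub uh dub duh"
    "mass G ub uh = (\<Sum>e\<in>bedges G. len G e) * t powr (2 * sb p)
        + t powr (2 * sb p) * (\<Sum>h\<in>hedges G. integral {0..} (\<lambda>y. (phi p (y + sh h))^2)) / t"
    "energy p G ub uh dub duh = 1/2 * (t powr (2 * sb p + 2) * (\<Sum>h\<in>hedges G. integral {0..} (\<lambda>y. (dphi p (y + sh h))^2)) / t)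
        - 1/p * ((\<Sum>e\<in>bedges G. len G e) * t powr (2 * sb p + 2)
                 + t powr (2 * sb p + 2) * (\<Sum>h\<in>hedges G. integral {0..} (\<lambda>y. \<bar>phi p (y + sh h)\<bar> powr p)) / t)"
proof -
  have Gb: "\<forall>e\<in>bedges G. 0 < len G e" using G by (simp add: finite_graph_in_G_def)
  have tb: "t powr sb p > 0" using t by simp
  have phish: "phi p (sh h) = 1" if "h \<in> hedges G" for h
    using sh that phi_sa[OF p] phi_even[of p "sa p"] by auto
  have sc1: "integral {0..} (\<lambda>x. (phi p (t*x + sh h))^2) = integral {0..} (\<lambda>y. (phi p (y + sh h))^2) / t"
    and ic1: "(\<lambda>x. (phi p (t*x + sh h))^2) integrable_on {0..}" for h
    using scale_int[OF psi_ints(1)[OF p, of "sh h"] t] by auto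
  have sc2: "integral {0..} (\<lambda>x. (dphi p (t*x + sh h))^2) = integral {0..} (\<lambda>y. (dphi p (y + sh h))^2) / t"
    and ic2: "(\<lambda>x. (dphi p (t*x + sh h))^2) integrable_on {0..}" for h
    using scale_int[OF psi_ints(2)[OF p, of "sh h"] t] by auto
  have sc3: "integral {0..} (\<lambda>x. \<bar>phi p (t*x + sh h)\<bar> powr p) = integral {0..} (\<lambda>y. \<bar>phi p (y + sh h)\<bar> powr p) / t" for h
    using scale_int[OF psi_ints(3)[OF p, of "sh h"] t] by auto
  have e2: "sb p * p = 2 * sb p + 2" using p by (simp add: sb_def field_simps)
  show "positive_kirchhoff_solution p (t^2) G ub uh dub duh"
    unfolding positive_kirchhoff_solution_def
  proof (intro conjI ballI)
    fix e assume e: "e \<in> bedges G"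
    show "edge_solution p (t^2) {0..len G e} (ub e) (dub e)"
      unfolding edge_solution_def
    proof (intro exI[of _ "\<lambda>x. 0"] ballI conjI)
      fix x
      show "(ub e has_real_derivative dub e x) (at x within {0..len G e})"
        unfolding ub_def dub_def by (rule DERIV_const)
      show "(dub e has_real_derivative 0) (at x within {0..len G e})"
        unfolding dub_def by (rule DERIV_const)
      have "(t powr sb p) powr (p - 1) = t powr (sb p + 2)"
        using p t by (simp add: powr_powr sb_def field_simps)
      also have "\<dots> = t^2 * t powr sb p" using t by (simp add: powr_add powr_numeral)
      finally show "0 + ub e x powr (p - 1) = t^2 * ub e x" unfolding ub_def by simp
    qed
  next
    fix h assume h: "h \<in> hedges G"
    show "edge_solution p (t^2) {0..} (uh h) (duh h)"
      unfolding edge_solution_def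
    proof (intro exI[of _ "\<lambda>x. t powr (sb p + 2) * (phi p (t*x + sh h) - phi p (t*x + sh h) powr (p - 1))"] ballI conjI)
      fix x :: real
      have "((\<lambda>x. t powr sb p * phi p (t*x + sh h)) has_real_derivative t powr sb p * (dphi p (t*x + sh h) * t)) (at x)"
        by (rule uh_deriv[OF p])
      moreover have "t powr sb p * (dphi p (t*x + sh h) * t) = duh h x"
        unfolding duh_def using t by (simp add: powr_add)
      ultimately show "(uh h has_real_derivative duh h x) (at x within {0..})"
        unfolding uh_def by (simp add: has_field_derivative_at_within)
      have "((\<lambda>x. t powr (sb p + 1) * dphi p (t*x + sh h)) has_real_derivative
          t powr (sb p + 1) * ((phi p (t*x + sh h) - phi p (t*x + sh h) powr (p - 1)) * t)) (at x)"
        by (rule duh_deriv[OF p])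
      moreover have "t powr (sb p + 1) * ((phi p (t*x + sh h) - phi p (t*x + sh h) powr (p - 1)) * t)
          = t powr (sb p + 2) * (phi p (t*x + sh h) - phi p (t*x + sh h) powr (p - 1))"
      proof -
        have "t powr (sb p + 2) = t powr ((sb p + 1) + 1)" by (simp add: add.assoc)
        also have "\<dots> = t powr (sb p + 1) * t powr 1" by (rule powr_add)
        finally have "t powr (sb p + 2) = t powr (sb p + 1) * t powr 1" .
        thus ?thesis using t by simp
      qed
      ultimately show "(duh h has_real_derivative t powr (sb p + 2) * (phi p (t*x + sh h) - phi p (t*x + sh h) powr (p - 1))) (at x within {0..})"
        unfolding duh_def by (simp add: has_field_derivative_at_within)
      show "t powr (sb p + 2) * (phi p (t*x + sh h) - phi p (t*x + sh h) powr (p - 1)) + uh h x powr (p - 1) = t^2 * uh h x"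
        unfolding uh_def by (rule scaled_ode[OF p t phi_pos[OF p]])
    qed
  next
    show "vertex_continuous G ub uh"
      unfolding vertex_continuous_def
      by (rule exI[of _ "\<lambda>v. t powr sb p"]) (simp add: ub_def uh_def phish)
  next
    fix h assume h: "h \<in> hedges G"
    have "(\<lambda>x. (t powr sb p)^2 * (phi p (t*x + sh h))^2) integrable_on {0..}"
      using integrable_on_cmult_left[OF ic1, of "(t powr sb p)^2"] by simp
    thus "(\<lambda>x. (uh h x)\<^sup>2) integrable_on {0..}"
      unfolding uh_def by (simp add: power_mult_distrib)
    have "(\<lambda>x. (t powr (sb p + 1))^2 * (dphi p (t*x + sh h))^2) integrable_on {0..}"
      using integrable_on_cmult_left[OF ic2, of "(t powr (sb p + 1))^2"] by simp
    thus "(\<lambda>x. (duh h x)\<^sup>2) integrable_on {0..}"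
      unfolding duh_def by (simp add: power_mult_distrib)
  next
    fix e x assume "e \<in> bedges G" "x \<in> {0..len G e}"
    show "0 < ub e x" unfolding ub_def using t by simp
  next
    fix h x assume "h \<in> hedges G" "x \<in> {0::real..}"
    show "0 < uh h x" unfolding uh_def using t phi_pos[OF p] by simp
  next
    fix v assume v: "v \<in> verts G"
    have "(\<Sum>h\<in>{h\<in>hedges G. att G h = v}. duh h 0)
        = t powr (sb p + 1) * (\<Sum>h\<in>{h\<in>hedges G. att G h = v}. dphi p (sh h))"
      unfolding duh_def by (simp add: sum_distrib_left)
    also have "\<dots> = 0" using bal v by simp
    finally show "(\<Sum>e\<in>{e\<in>bedges G. src G e = v}. dub e 0)
      - (\<Sum>e\<in>{e\<in>bedges G. tgt G e = v}. dub e (len G e))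
      + (\<Sum>h\<in>{h\<in>hedges G. att G h = v}. duh h 0) = 0"
      unfolding dub_def by simp
  qed
  have bint1: "integral {0..len G e} (\<lambda>x. (ub e x)\<^sup>2) = len G e * t powr (2 * sb p)" if "e \<in> bedges G" for e
  proof -
    have "(t powr sb p)^2 = t powr (2 * sb p)" using t
      by (simp add: powr_powr[symmetric] powr_numeral mult.commute)
    thus ?thesis using Gb that unfolding ub_def by (simp add: less_imp_le)
  qed
  have hint1: "integral {0..} (\<lambda>x. (uh h x)\<^sup>2) = t powr (2 * sb p) * (integral {0..} (\<lambda>y. (phi p (y + sh h))^2) / t)" for h
  proof -
    have "(t powr sb p)^2 = t powr (2 * sb p)" using t
      by (simp add: powr_powr[symmetric] powr_numeral mult.commute)
    hence "(\<lambda>x. (uh h x)\<^sup>2) = (\<lambda>x. t powr (2 * sb p) * (phi p (t*x + sh h))^2)"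
      unfolding uh_def by (simp add: power_mult_distrib)
    thus ?thesis by (simp add: sc1)
  qed
  show "mass G ub uh = (\<Sum>e\<in>bedges G. len G e) * t powr (2 * sb p)
        + t powr (2 * sb p) * (\<Sum>h\<in>hedges G. integral {0..} (\<lambda>y. (phi p (y + sh h))^2)) / t"
    unfolding mass_def using bint1 hint1
    by (simp add: sum_distrib_left sum_distrib_right sum_divide_distrib)
  have bint2: "integral {0..len G e} (\<lambda>x. \<bar>ub e x\<bar> powr p) = len G e * t powr (2 * sb p + 2)" if "e \<in> bedges G" for e
  proof -
    have "\<bar>t powr sb p\<bar> powr p = t powr (2 * sb p + 2)" using t
      by (simp add: powr_powr e2)
    thus ?thesis using Gb that unfolding ub_def by (simp add: less_imp_le)
  qed
  have hint2: "integral {0..} (\<lambda>x. \<bar>uh h x\<bar> powr p) = t powr (2 * sb p + 2) * (integral {0..} (\<lambda>y. \<bar>phi p (y + sh h)\<bar> powr p) / t)" for h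
  proof -
    have "(\<lambda>x. \<bar>uh h x\<bar> powr p) = (\<lambda>x. t powr (2 * sb p + 2) * \<bar>phi p (t*x + sh h)\<bar> powr p)"
      unfolding uh_def using t by (simp add: abs_mult powr_mult powr_powr e2)
    thus ?thesis by (simp add: sc3)
  qed
  have hint3: "integral {0..} (\<lambda>x. (duh h x)\<^sup>2) = t powr (2 * sb p + 2) * (integral {0..} (\<lambda>y. (dphi p (y + sh h))^2) / t)" for h
  proof -
    have "(t powr (sb p + 1))^2 = t powr (sb p + 1) * t powr (sb p + 1)" by (simp add: power2_eq_square)
    also have "\<dots> = t powr ((sb p + 1) + (sb p + 1))" by (rule powr_add[symmetric])
    also have "(sb p + 1) + (sb p + 1) = 2 * sb p + 2" by simp
    finally have "(t powr (sb p + 1))^2 = t powr (2 * sb p + 2)" .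
    hence "(\<lambda>x. (duh h x)\<^sup>2) = (\<lambda>x. t powr (2 * sb p + 2) * (dphi p (t*x + sh h))^2)"
      unfolding duh_def by (simp add: power_mult_distrib)
    thus ?thesis by (simp add: sc2)
  qed
  show "energy p G ub uh dub duh = 1/2 * (t powr (2 * sb p + 2) * (\<Sum>h\<in>hedges G. integral {0..} (\<lambda>y. (dphi p (y + sh h))^2)) / t)
        - 1/p * ((\<Sum>e\<in>bedges G. len G e) * t powr (2 * sb p + 2)
                 + t powr (2 * sb p + 2) * (\<Sum>h\<in>hedges G. integral {0..} (\<lambda>y. \<bar>phi p (y + sh h)\<bar> powr p)) / t)"
    unfolding energy_def using bint2 hint2 hint3
    by (simp add: dub_def sum_distrib_left sum_distrib_right sum_divide_distrib)
qed

lemma balanced_signs: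
  fixes f :: "real \<Rightarrow> real" and a :: real
  assumes fin: "finite (hedges G)" and ev: "\<forall>v\<in>verts G. even (card {h\<in>hedges G. att G h = v})"
    and odd: "\<And>x. f (- x) = - f x"
  obtains sh where "\<forall>h\<in>hedges G. sh h = a \<or> sh h = - a"
    "\<forall>v\<in>verts G. (\<Sum>h\<in>{h\<in>hedges G. att G h = v}. f (sh h)) = 0"
proof -
  define H where "H v = {h\<in>hedges G. att G h = v}" for v
  have finH: "finite (H v)" for v using fin unfolding H_def by simp
  have exB: "\<exists>B. B \<subseteq> H v \<and> card B = card (H v) div 2" for v
    by (metis obtain_subset_with_card_n div_le_dividend)
  define B where "B v = (SOME B. B \<subseteq> H v \<and> card B = card (H v) div 2)" for v
  have B: "B v \<subseteq> H v" "card (B v) = card (H v) div 2" for v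
    using someI_ex[OF exB[of v]] unfolding B_def by auto
  define sh where "sh h = (if h \<in> B (att G h) then a else - a)" for h
  show ?thesis
  proof (rule that)
    show "\<forall>h\<in>hedges G. sh h = a \<or> sh h = - a" by (simp add: sh_def)
  next
    show "\<forall>v\<in>verts G. (\<Sum>h\<in>{h\<in>hedges G. att G h = v}. f (sh h)) = 0"
    proof
      fix v assume v: "v \<in> verts G"
      have "(\<Sum>h\<in>H v. f (sh h)) = (\<Sum>h\<in>H v. if h \<in> B v then f a else - f a)"
        by (rule sum.cong) (auto simp: sh_def H_def odd)
      also have "\<dots> = (\<Sum>h\<in>H v \<inter> {h. h \<in> B v}. f a) + (\<Sum>h\<in>H v \<inter> - {h. h \<in> B v}. - f a)"
        by (rule sum.If_cases[OF finH])
      also have "H v \<inter> {h. h \<in> B v} = B v" using B(1) by auto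
      also have "H v \<inter> - {h. h \<in> B v} = H v - B v" by auto
      also have "card (H v - B v) = card (B v)"
      proof -
        have "card (H v - B v) = card (H v) - card (B v)"
          using B(1)[of v] finH[of v] by (meson card_Diff_subset finite_subset)
        moreover have "even (card (H v))" using ev v unfolding H_def by simp
        ultimately show ?thesis using B(2) by auto
      qed
      hence "(\<Sum>h\<in>B v. f a) + (\<Sum>h\<in>H v - B v. - f a) = 0" by (simp only: sum_constant; simp)
      finally show "(\<Sum>h\<in>{h\<in>hedges G. att G h = v}. f (sh h)) = 0" unfolding H_def .
    qed
  qed
qed

theorem theorem1p4:
  fixes G :: mgraph
  assumes "finite_graph_in_G G"
    and "noncompact G"
    and "bedges G \<noteq> {}"
    and "\<forall>v\<in>verts G. even (card {h\<in>hedges G. att G h = v})"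
  shows "\<forall>p::real. p > 6 \<longrightarrow>
           (\<exists>\<mu>bar>0. \<forall>\<mu>\<ge>\<mu>bar. \<exists>lam ub uh dub duh.
              positive_kirchhoff_solution p lam G ub uh dub duh \<and>
              mass G ub uh = \<mu> \<and> energy p G ub uh dub duh < 0)"
proof (intro allI impI)
  fix p :: real assume p6: "p > 6"
  hence p: "p > 2" by simp
  have G: "finite_graph_in_G G" by fact
  have finH: "finite (hedges G)" and finB: "finite (bedges G)"
    and lenpos: "\<forall>e\<in>bedges G. 0 < len G e"
    using G by (auto simp: finite_graph_in_G_def)
  obtain sh where sh: "\<forall>h\<in>hedges G. sh h = sa p \<or> sh h = - sa p"
    and bal: "\<forall>v\<in>verts G. (\<Sum>h\<in>{h\<in>hedges G. att G h = v}. dphi p (sh h)) = 0"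
    using balanced_signs[OF finH assms(4), of "dphi p" "sa p"] dphi_odd by blast
  define L where "L = (\<Sum>e\<in>bedges G. len G e)"
  define I where "I = (\<Sum>h\<in>hedges G. integral {0..} (\<lambda>y. (phi p (y + sh h))^2))"
  define J where "J = (\<Sum>h\<in>hedges G. integral {0..} (\<lambda>y. (dphi p (y + sh h))^2))"
  define P where "P = (\<Sum>h\<in>hedges G. integral {0..} (\<lambda>y. \<bar>phi p (y + sh h)\<bar> powr p))"
  define b where "b = sb p"
  have b: "b > 0" using p by (simp add: b_def sb_def)
  have L: "L > 0" unfolding L_def using finB assms(3) lenpos by (intro sum_pos) auto
  have I: "I \<ge> 0" unfolding I_def
  proof (intro sum_nonneg integral_nonneg)
    fix h show "(\<lambda>y. (phi p (y + sh h))^2) integrable_on {0..}"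
      using psi_ints(1)[OF p, of "sh h"] by (auto dest: set_lebesgue_integral_eq_integral(1))
  qed auto
  define M where "M t = L * t powr (2 * b) + t powr (2 * b) * I / t" for t
  define E where "E t = 1/2 * (t powr (2 * b + 2) * J / t) - 1/p * (L * t powr (2 * b + 2) + t powr (2 * b + 2) * P / t)" for t
  define K where "K = 1/2 * J - 1/p * P"
  define t0 where "t0 = max 1 (p * \<bar>K\<bar> / L + 1)"
  have t0: "t0 \<ge> 1" unfolding t0_def by simp
  have Eneg: "E t < 0" if t: "t \<ge> t0" for t
  proof -
    have tp: "t > 0" using t t0 by simp
    have "t > p * \<bar>K\<bar> / L" using t unfolding t0_def by simp
    hence "t * L > p * \<bar>K\<bar>" using L by (simp add: pos_divide_less_eq)
    hence "K * p < t * L" by (smt (verit) p mult_left_mono abs_ge_self mult.commute)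
    hence "K / t < L / p" using tp p by (simp add: field_simps)
    moreover have "E t = t powr (2 * b + 2) * (K / t - L / p)"
      unfolding E_def K_def using tp p by (simp add: field_simps)
    moreover have "t powr (2 * b + 2) > 0" using tp by simp
    ultimately show ?thesis by (simp add: mult_pos_neg)
  qed
  have Mpos: "M t0 > 0" unfolding M_def using L I t0 by (intro add_pos_nonneg) auto
  have Mcont: "continuous_on {t0..T} M" for T
    unfolding M_def using t0 by (intro continuous_intros) auto
  show "\<exists>\<mu>bar>0. \<forall>\<mu>\<ge>\<mu>bar. \<exists>lam ub uh dub duh.
              positive_kirchhoff_solution p lam G ub uh dub duh \<and>
              mass G ub uh = \<mu> \<and> energy p G ub uh dub duh < 0"
  proof -
  have main: "\<exists>lam ub uh dub duh.
              positive_kirchhoff_solution p lam G ub uh dub duh \<and>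
              mass G ub uh = \<mu> \<and> energy p G ub uh dub duh < 0" if mu: "\<mu> \<ge> M t0" for \<mu>
  proof -
    have mupos: "\<mu> > 0" using mu Mpos by simp
    define T where "T = max t0 ((\<mu> / L) powr (1 / (2 * b)))"
    have T: "T \<ge> t0" unfolding T_def by simp
    have "\<mu> / L = ((\<mu> / L) powr (1 / (2 * b))) powr (2 * b)"
      using mupos L b by (simp add: powr_powr)
    also have "\<dots> \<le> T powr (2 * b)"
      unfolding T_def using b by (intro powr_mono2) auto
    finally have "\<mu> \<le> L * T powr (2 * b)" using L by (simp add: divide_le_eq mult.commute)
    also have "\<dots> \<le> M T" unfolding M_def using I T t0 by simp
    finally have muT: "\<mu> \<le> M T" .
    obtain t where t: "t0 \<le> t" "t \<le> T" "M t = \<mu>"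
      using IVT'[of M t0 \<mu> T, OF mu muT T Mcont] by blast
    have tp: "t > 0" using t t0 by simp
    note C = construct[OF G p tp sh bal]
    show ?thesis
    proof -
      let ?ub = "\<lambda>(e::nat) (x::real). t powr sb p"
      let ?dub = "\<lambda>(e::nat) (x::real). (0::real)"
      let ?uh = "\<lambda>h x. t powr sb p * phi p (t*x + sh h)"
      let ?duh = "\<lambda>h x. t powr (sb p + 1) * dphi p (t*x + sh h)"
      have "mass G ?ub ?uh = \<mu>"
        using C(2) t(3) by (simp add: M_def L_def I_def b_def)
      moreover have "energy p G ?ub ?uh ?dub ?duh < 0"
        using C(3) Eneg[OF t(1)] by (simp add: E_def L_def J_def P_def b_def)
      ultimately show ?thesis using C(1) by blast
    qed
  qed
  show ?thesis using Mpos main by blast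
  qed
qed

end
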